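(* Let $a<b$ be real, $y\in(a,b)$, and let $n\ge2$ be an integer. Then $$\left(\frac{(n-2)\log 2}{32\min\{y-a,b-y\}}\right)^{1/2} \le \sup_{0\ne f\in\mathcal{E}_n}\frac{|f(y)|}{\|f\|_{L_2[a,b]}} \le \left(\frac{2n}{\min\{y-a,b-y\}}\right)^{1/2}.$$
   Context: $\mathcal{E}_n$ denotes the set of all functions $f(t)=\sum_{j=1}^na_je^{\lambda_jt}$ ($t\in\mathbb{R}$) with $a_j,\lambda_j\in\mathbb{C}$. $\|f\|_{L_2[a,b]}=(\int_a^b|f(t)|^2dt)^{1/2}$. *)

theory Defs
  imports "HOL-Analysis.Analysis"
begin

definition exp_sums :: "nat \<Rightarrow> (real \<Rightarrow> complex) set" where
  "exp_sums n = {f. \<exists>c lam :: nat \<Rightarrow> complex.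
      f = (\<lambda>t. \<Sum>j\<in>{1..n}. c j * exp (lam j * complex_of_real t))}"

definition L2_norm_on :: "real \<Rightarrow> real \<Rightarrow> (real \<Rightarrow> complex) \<Rightarrow> real" where
  "L2_norm_on a b f = sqrt (integral {a..b} (\<lambda>t. (cmod (f t))^2))"

end

theory Submission
  imports Defs
begin

definition ip :: "real \<Rightarrow> (real\<Rightarrow>complex) \<Rightarrow> (real\<Rightarrow>complex) \<Rightarrow> complex" where
  "ip D g h = integral {0..D} (\<lambda>t. g t * cnj (h t))"

lemma mult_cnj_sq: "z * cnj z = (complex_of_real (cmod z))\<^sup>2"
  using complex_norm_square[of z] by simp

lemma ip_cnj: "ip D h g = cnj (ip D g h)"
  unfolding ip_def integral_cnj by (simp add: mult.commute)

lemma ip_integrable: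
  fixes g h :: "real \<Rightarrow> complex"
  assumes "continuous_on {0..D} g" "continuous_on {0..D} h"
  shows "(\<lambda>t. g t * cnj (h t)) integrable_on {0..D}"
  apply (rule integrable_continuous_interval)
  apply (intro continuous_intros assms)
  done

lemma ip_self:
  assumes "continuous_on {0..D} g"
  shows "ip D g g = of_real (integral {0..D} (\<lambda>t. (cmod (g t))\<^sup>2))"
proof -
  have i: "(\<lambda>t. (cmod (g t))\<^sup>2) integrable_on {0..D}"
    by (intro integrable_continuous_interval continuous_intros assms)
  have "ip D g g = integral {0..D} (\<lambda>t. of_real ((cmod (g t))\<^sup>2))"
    unfolding ip_def by (intro integral_cong) (simp add: mult_cnj_sq)
  also have "\<dots> = of_real (integral {0..D} (\<lambda>t. (cmod (g t))\<^sup>2))"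
    using integral_unique[OF has_integral_of_real[OF integrable_integral[OF i]]] by simp
  finally show ?thesis .
qed

lemma ip_sum_left:
  assumes "finite I" "\<And>i. i \<in> I \<Longrightarrow> continuous_on {0..D} (g i)" "continuous_on {0..D} h"
  shows "ip D (\<lambda>s. \<Sum>i\<in>I. a i * g i s) h = (\<Sum>i\<in>I. a i * ip D (g i) h)"
proof -
  have "ip D (\<lambda>s. \<Sum>i\<in>I. a i * g i s) h = integral {0..D} (\<lambda>t. \<Sum>i\<in>I. a i * (g i t * cnj (h t)))"
    unfolding ip_def by (simp add: sum_distrib_right mult.assoc)
  also have "\<dots> = (\<Sum>i\<in>I. integral {0..D} (\<lambda>t. a i * (g i t * cnj (h t))))"
    by (intro integral_sum assms(1) integrable_on_mult_right ip_integrable assms(2,3))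
  also have "\<dots> = (\<Sum>i\<in>I. a i * ip D (g i) h)" by (simp add: ip_def)
  finally show ?thesis .
qed

lemma ip_add_left:
  assumes "continuous_on {0..D} g" "continuous_on {0..D} g'" "continuous_on {0..D} h"
  shows "ip D (\<lambda>s. g s + c * g' s) h = ip D g h + c * ip D g' h"
proof -
  have "ip D (\<lambda>s. g s + c * g' s) h = integral {0..D} (\<lambda>t. g t * cnj (h t) + c * (g' t * cnj (h t)))"
    unfolding ip_def by (simp add: algebra_simps)
  also have "\<dots> = ip D g h + c * ip D g' h"
    by (subst integral_add) (auto simp: ip_def intro!: integrable_on_mult_right ip_integrable assms)
  finally show ?thesis .
qed

lemma ip_cong_left:
  assumes "\<And>t. t \<in> {0..D} \<Longrightarrow> g t = g' t"
  shows "ip D g h = ip D g' h"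
  unfolding ip_def by (intro integral_cong) (simp add: assms)

lemma ip_zero_imp:
  assumes "D > 0" "continuous_on {0..D} g" "ip D g g = 0" "t \<in> {0..D}"
  shows "g t = 0"
proof -
  have "integral {0..D} (\<lambda>t. (cmod (g t))\<^sup>2) = 0" using ip_self[OF assms(2)] assms(3) by simp
  then have "\<forall>x\<in>{0..D}. (cmod (g x))\<^sup>2 = 0"
    by (subst (asm) integral_eq_0_iff) (auto intro!: continuous_intros assms)
  then show ?thesis using assms(4) by simp
qed

lemma ip_self_nonneg:
  assumes "continuous_on {0..D} g"
  shows "Re (ip D g g) \<ge> 0" "Im (ip D g g) = 0"
  using ip_self[OF assms] by (auto intro!: integral_nonneg integrable_continuous_interval continuous_intros assms)

lemma gram_schmidt:
  fixes \<phi> :: "nat \<Rightarrow> real \<Rightarrow> complex"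
  assumes D: "D > 0" and cphi: "\<And>j. continuous_on {0..D} (\<phi> j)"
  shows "\<exists>d e. d \<le> k \<and> (\<forall>i<d. continuous_on {0..D} (e i)) \<and>
     (\<forall>i<d. \<forall>j<d. ip D (e i) (e j) = (if i = j then 1 else 0)) \<and>
     (\<forall>c. \<forall>t\<in>{0..D}. (\<Sum>j<k. c j * \<phi> j t) =
          (\<Sum>i<d. ip D (\<lambda>s. \<Sum>j<k. c j * \<phi> j s) (e i) * e i t))"
proof (induction k)
  case 0
  show ?case by (rule exI[of _ 0]) simp
next
  case (Suc k)
  then obtain d e where dk: "d \<le> k" and ce: "\<forall>i<d. continuous_on {0..D} (e i)"
    and on: "\<forall>i<d. \<forall>j<d. ip D (e i) (e j) = (if i = j then 1 else 0)"
    and rep: "\<forall>c. \<forall>t\<in>{0..D}. (\<Sum>j<k. c j * \<phi> j t) =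
          (\<Sum>i<d. ip D (\<lambda>s. \<Sum>j<k. c j * \<phi> j s) (e i) * e i t)"
    by blast
  define F where "F = (\<lambda>c s. \<Sum>j<k. c j * \<phi> j s)"
  have cF: "continuous_on {0..D} (F c)" for c
    unfolding F_def by (intro continuous_intros cphi)
  have F': "(\<lambda>s. \<Sum>j<Suc k. c j * \<phi> j s) = (\<lambda>s. F c s + c k * \<phi> k s)" for c
    by (simp add: F_def)
  define a where "a = (\<lambda>i. ip D (\<phi> k) (e i))"
  define r where "r = (\<lambda>t. \<phi> k t - (\<Sum>i<d. a i * e i t))"
  have cr: "continuous_on {0..D} r"
    unfolding r_def using ce by (intro continuous_intros cphi) auto
  have csum: "continuous_on {0..D} (\<lambda>s. \<Sum>i<d. b i * e i s)" for b
    using ce by (intro continuous_on_sum continuous_intros) auto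
  have ipsum: "ip D (\<lambda>s. \<Sum>i<d. b i * e i s) h = (\<Sum>i<d. b i * ip D (e i) h)"
    if "continuous_on {0..D} h" for b h
    using ce that by (intro ip_sum_left) auto
  have ipr: "ip D r (e j) = 0" if "j < d" for j
  proof -
    have "ip D r (e j) = ip D (\<phi> k) (e j) + (-1) * ip D (\<lambda>s. \<Sum>i<d. a i * e i s) (e j)"
      unfolding r_def using ip_add_left[of D "\<phi> k" "\<lambda>s. \<Sum>i<d. a i * e i s" "e j" "-1"] ce that cphi csum
      by simp
    also have "\<dots> = a j - (\<Sum>i<d. a i * ip D (e i) (e j))"
      using ipsum[of "e j" a] ce that by (simp add: a_def)
    also have "(\<Sum>i<d. a i * ip D (e i) (e j)) = (\<Sum>i<d. if i = j then a i else 0)"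
      using on that by (intro sum.cong) auto
    also have "\<dots> = a j" using that by simp
    finally show ?thesis by simp
  qed
  have phik: "\<phi> k t = r t + (\<Sum>i<d. a i * e i t)" for t by (simp add: r_def)
  have ipF': "ip D (\<lambda>s. \<Sum>j<Suc k. c j * \<phi> j s) h = ip D (F c) h + c k * ip D (\<phi> k) h"
    if "continuous_on {0..D} h" for c h
    unfolding F' using ip_add_left[OF cF cphi that] .
  show ?case
  proof (cases "ip D r r = 0")
    case True
    have r0: "r t = 0" if "t \<in> {0..D}" for t using ip_zero_imp[OF D cr True that] .
    show ?thesis
    proof (rule exI[of _ d], rule exI[of _ e], intro conjI)
      show "d \<le> Suc k" using dk by simp
      show "\<forall>i<d. continuous_on {0..D} (e i)" by fact
      show "\<forall>i<d. \<forall>j<d. ip D (e i) (e j) = (if i = j then 1 else 0)" by fact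
      show "\<forall>c. \<forall>t\<in>{0..D}. (\<Sum>j<Suc k. c j * \<phi> j t) =
          (\<Sum>i<d. ip D (\<lambda>s. \<Sum>j<Suc k. c j * \<phi> j s) (e i) * e i t)"
      proof (intro allI ballI)
      fix c t assume t: "t \<in> {0..D}"
      have "(\<Sum>j<Suc k. c j * \<phi> j t) = F c t + c k * \<phi> k t" by (simp add: F_def)
      also have "\<dots> = (\<Sum>i<d. ip D (F c) (e i) * e i t) + c k * (\<Sum>i<d. a i * e i t)"
        using rep t r0[OF t] phik[of t] by (simp add: F_def)
      also have "\<dots> = (\<Sum>i<d. (ip D (F c) (e i) + c k * a i) * e i t)"
        by (simp add: sum_distrib_left distrib_right sum.distrib mult.assoc)
      also have "\<dots> = (\<Sum>i<d. ip D (\<lambda>s. \<Sum>j<Suc k. c j * \<phi> j s) (e i) * e i t)"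
        using ipF' ce by (intro sum.cong) (auto simp: a_def)
      finally show "(\<Sum>j<Suc k. c j * \<phi> j t) =
          (\<Sum>i<d. ip D (\<lambda>s. \<Sum>j<Suc k. c j * \<phi> j s) (e i) * e i t)" .
      qed
    qed
  next
    case False
    define N where "N = Re (ip D r r)"
    have Nr: "ip D r r = of_real N" using ip_self_nonneg[OF cr] unfolding N_def
      by (simp add: complex_eq_iff)
    have Npos: "N > 0" using ip_self_nonneg[OF cr] False Nr unfolding N_def by (metis less_eq_real_def of_real_0)
    define \<sigma> where "\<sigma> = sqrt N"
    have sp: "\<sigma> > 0" using Npos by (simp add: \<sigma>_def)
    have ss: "\<sigma> * \<sigma> = N" using Npos by (simp add: \<sigma>_def)
    define en where "en = (\<lambda>t. r t / of_real \<sigma>)"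
    have cen: "continuous_on {0..D} en" unfolding en_def by (intro continuous_intros cr) (use sp in auto)
    define e' where "e' = e(d := en)"
    have ce': "\<forall>i<Suc d. continuous_on {0..D} (e' i)" using ce cen by (auto simp: e'_def less_Suc_eq)
    have en_eq: "en = (\<lambda>t. (1 / of_real \<sigma>) * r t)" by (auto simp: en_def)
    have ipen_left: "ip D en h = (1 / of_real \<sigma>) * ip D r h" if "continuous_on {0..D} h" for h
    proof -
      have "ip D en h = ip D (\<lambda>t. 0 + (1 / of_real \<sigma>) * r t) h" by (simp add: en_eq)
      also have "\<dots> = ip D (\<lambda>t. 0) h + (1 / of_real \<sigma>) * ip D r h"
        by (rule ip_add_left) (auto intro: cr that)
      also have "ip D (\<lambda>t. 0) h = 0" by (simp add: ip_def)
      finally show ?thesis by simp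
    qed
    have en_ej: "ip D en (e j) = 0" if "j < d" for j
      using ipen_left[of "e j"] ce that ipr by simp
    have ej_en: "ip D (e j) en = 0" if "j < d" for j
      using en_ej[OF that] ip_cnj[of D "e j" en] by simp
    have ipren: "ip D r en = of_real \<sigma>"
    proof -
      have Ns: "N / \<sigma> = \<sigma>" using ss sp by (simp add: field_simps)
      have "ip D en r = of_real N / of_real \<sigma>" using ipen_left[OF cr] Nr by simp
      also have "\<dots> = of_real (N / \<sigma>)" by simp
      finally have "ip D en r = of_real \<sigma>" using Ns by simp
      then show ?thesis using ip_cnj[of D r en] by simp
    qed
    have en_en: "ip D en en = 1"
      using ipen_left[OF cen] ipren sp by simp
    have phik_en: "ip D (\<phi> k) en = of_real \<sigma>"
    proof -
      have "ip D (\<phi> k) en = ip D (\<lambda>t. r t + 1 * (\<Sum>i<d. a i * e i t)) en"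
        by (rule ip_cong_left) (simp add: phik)
      also have "\<dots> = ip D r en + 1 * ip D (\<lambda>t. \<Sum>i<d. a i * e i t) en"
        by (rule ip_add_left) (use cr cen ce in \<open>auto intro!: continuous_intros\<close>)
      also have "ip D (\<lambda>t. \<Sum>i<d. a i * e i t) en = 0"
        using ipsum[OF cen, of a] ej_en by simp
      finally show ?thesis using ipren by simp
    qed
    have Fc_en: "ip D (F c) en = 0" for c
    proof -
      have "ip D (F c) en = ip D (\<lambda>s. \<Sum>i<d. ip D (F c) (e i) * e i s) en"
        using rep by (intro ip_cong_left) (simp add: F_def)
      also have "\<dots> = 0" using ipsum[OF cen] ej_en by simp
      finally show ?thesis .
    qed
    show ?thesis
    proof (rule exI[of _ "Suc d"], rule exI[of _ e'], intro conjI)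
      show "Suc d \<le> Suc k" using dk by simp
      show "\<forall>i<Suc d. continuous_on {0..D} (e' i)" using ce' by blast
      show "\<forall>i<Suc d. \<forall>j<Suc d. ip D (e' i) (e' j) = (if i = j then 1 else 0)"
        using on en_en en_ej ej_en by (auto simp: e'_def less_Suc_eq)
      show "\<forall>c. \<forall>t\<in>{0..D}. (\<Sum>j<Suc k. c j * \<phi> j t) =
          (\<Sum>i<Suc d. ip D (\<lambda>s. \<Sum>j<Suc k. c j * \<phi> j s) (e' i) * e' i t)"
      proof (intro allI ballI)
      fix c t assume t: "t \<in> {0..D}"
      have "(\<Sum>j<Suc k. c j * \<phi> j t) = F c t + c k * \<phi> k t" by (simp add: F_def)
      also have "\<dots> = (\<Sum>i<d. ip D (F c) (e i) * e i t) + c k * ((\<Sum>i<d. a i * e i t) + of_real \<sigma> * en t)"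
        using rep t phik[of t] sp by (simp add: F_def en_def)
      also have "\<dots> = (\<Sum>i<d. (ip D (F c) (e i) + c k * a i) * e i t) + (ip D (F c) en + c k * of_real \<sigma>) * en t"
        by (simp add: sum_distrib_left distrib_right distrib_left sum.distrib mult.assoc Fc_en)
      also have "\<dots> = (\<Sum>i<d. ip D (\<lambda>s. \<Sum>j<Suc k. c j * \<phi> j s) (e' i) * e' i t)
           + ip D (\<lambda>s. \<Sum>j<Suc k. c j * \<phi> j s) (e' d) * e' d t"
        using ipF' ce cen phik_en by (auto simp: a_def e'_def intro!: sum.cong)
      also have "\<dots> = (\<Sum>i<Suc d. ip D (\<lambda>s. \<Sum>j<Suc k. c j * \<phi> j s) (e' i) * e' i t)"
        by simp
      finally show "(\<Sum>j<Suc k. c j * \<phi> j t) =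
          (\<Sum>i<Suc d. ip D (\<lambda>s. \<Sum>j<Suc k. c j * \<phi> j s) (e' i) * e' i t)" .
      qed
    qed
  qed
qed

lemma parseval_bound:
  fixes g :: "real \<Rightarrow> complex" and e :: "nat \<Rightarrow> real \<Rightarrow> complex"
  assumes cg: "continuous_on {0..D} g" and ce: "\<forall>i<d. continuous_on {0..D} (e i)"
    and on: "\<forall>i<d. \<forall>j<d. ip D (e i) (e j) = (if i = j then 1 else 0)"
    and rep: "\<forall>t\<in>{0..D}. g t = (\<Sum>i<d. ip D g (e i) * e i t)"
    and u: "u \<in> {0..D}"
  shows "(cmod (g u))\<^sup>2 \<le> Re (ip D g g) * (\<Sum>i<d. (cmod (e i u))\<^sup>2)"
proof -
  define b where "b = (\<lambda>i. ip D g (e i))"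
  have "ip D g g = ip D (\<lambda>s. \<Sum>i<d. b i * e i s) g"
    using rep by (intro ip_cong_left) (simp add: b_def)
  also have "\<dots> = (\<Sum>i<d. b i * ip D (e i) g)"
    using ce cg by (intro ip_sum_left) auto
  also have "\<dots> = (\<Sum>i<d. of_real ((cmod (b i))\<^sup>2))"
    by (intro sum.cong refl) (simp add: ip_cnj[of D "e _" g] b_def mult_cnj_sq)
  finally have P: "Re (ip D g g) = (\<Sum>i<d. (cmod (b i))\<^sup>2)" by simp
  have "cmod (g u) = cmod (\<Sum>i<d. b i * e i u)" using rep u by (simp add: b_def)
  also have "\<dots> \<le> (\<Sum>i<d. cmod (b i) * cmod (e i u))"
    by (rule order_trans[OF norm_sum]) (simp add: norm_mult)
  finally have "(cmod (g u))\<^sup>2 \<le> (\<Sum>i<d. cmod (b i) * cmod (e i u))\<^sup>2"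
    by (intro power_mono) auto
  also have "\<dots> \<le> (\<Sum>i<d. (cmod (b i))\<^sup>2) * (\<Sum>i<d. (cmod (e i u))\<^sup>2)"
    by (rule Cauchy_Schwarz_ineq_sum)
  finally show ?thesis using P by simp
qed

lemma kernel_integral:
  fixes e :: "nat \<Rightarrow> real \<Rightarrow> complex"
  assumes ce: "\<forall>i<d. continuous_on {0..D} (e i)"
    and on: "\<forall>i<d. \<forall>j<d. ip D (e i) (e j) = (if i = j then 1 else 0)"
  shows "integral {0..D} (\<lambda>u. \<Sum>i<d. (cmod (e i u))\<^sup>2) = real d"
proof -
  have "integral {0..D} (\<lambda>u. \<Sum>i<d. (cmod (e i u))\<^sup>2) = (\<Sum>i<d. integral {0..D} (\<lambda>u. (cmod (e i u))\<^sup>2))"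
    using ce by (intro integral_sum) (auto intro!: integrable_continuous_interval continuous_intros)
  also have "\<dots> = (\<Sum>i<d. 1)"
  proof (intro sum.cong refl)
    fix i assume "i \<in> {..<d}"
    then have "ip D (e i) (e i) = 1" "continuous_on {0..D} (e i)" using on ce by auto
    then show "integral {0..D} (\<lambda>u. (cmod (e i u))\<^sup>2) = 1" using ip_self[of D "e i"] by simp
  qed
  finally show ?thesis by simp
qed

lemma upper_pointwise:
  fixes cc lam :: "nat \<Rightarrow> complex" and \<delta> y :: real and n :: nat
  assumes dpos: "\<delta> > 0"
  defines "f \<equiv> (\<lambda>t::real. \<Sum>j\<in>{1..n}. cc j * exp (lam j * complex_of_real t))"
  shows "(cmod (f y))\<^sup>2 * \<delta> \<le> real n * integral {y-\<delta>..y+\<delta>} (\<lambda>t. (cmod (f t))\<^sup>2)"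
proof -
  define \<phi> where "\<phi> = (\<lambda>j (t::real). exp (lam (Suc j) * complex_of_real t))"
  have cphi: "continuous_on {0..\<delta>} (\<phi> j)" for j
    unfolding \<phi>_def by (intro continuous_intros)
  obtain d e where dn: "d \<le> n" and ce: "\<forall>i<d. continuous_on {0..\<delta>} (e i)"
    and on: "\<forall>i<d. \<forall>j<d. ip \<delta> (e i) (e j) = (if i = j then 1 else 0)"
    and rep: "\<forall>c. \<forall>t\<in>{0..\<delta>}. (\<Sum>j<n. c j * \<phi> j t) =
          (\<Sum>i<d. ip \<delta> (\<lambda>s. \<Sum>j<n. c j * \<phi> j s) (e i) * e i t)"
    using gram_schmidt[where D=\<delta> and \<phi>=\<phi> and k=n, OF dpos cphi] by blast
  define M where "M = integral {y-\<delta>..y+\<delta>} (\<lambda>t. (cmod (f t))\<^sup>2)"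
  have cf: "continuous_on A f" for A unfolding f_def by (intro continuous_intros)
  have fsum: "f t = (\<Sum>j<n. cc (Suc j) * exp (lam (Suc j) * complex_of_real t))" for t
    unfolding f_def by (subst image_Suc_lessThan[symmetric], subst sum.reindex) auto
  define S where "S = (\<lambda>u. \<Sum>i<d. (cmod (e i u))\<^sup>2)"
  have key: "(cmod (f y))\<^sup>2 \<le> M * S u" if u: "u \<in> {0..\<delta>}" for u
  proof -
    define c where "c = (\<lambda>j. cc (Suc j) * exp (lam (Suc j) * complex_of_real (y - u)))"
    define g where "g = (\<lambda>s. \<Sum>j<n. c j * \<phi> j s)"
    have gf: "g s = f (s + (y - u))" for s
      unfolding g_def fsum c_def \<phi>_def
      by (intro sum.cong refl) (simp add: mult.assoc distrib_left add.commute flip: exp_add)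
    have cg: "continuous_on {0..\<delta>} g" unfolding g_def by (intro continuous_intros cphi)
    have "(cmod (g u))\<^sup>2 \<le> Re (ip \<delta> g g) * S u"
      unfolding S_def by (rule parseval_bound[OF cg ce on _ u]) (use rep in \<open>simp add: g_def\<close>)
    moreover have "Re (ip \<delta> g g) \<le> M"
    proof -
      have "Re (ip \<delta> g g) = integral {0..\<delta>} (\<lambda>s. (cmod (g s))\<^sup>2)" using ip_self[OF cg] by simp
      also have "\<dots> = integral {0..\<delta>} ((\<lambda>t. (cmod (f t))\<^sup>2) \<circ> (+) (y - u))"
        by (intro integral_cong) (simp add: gf add.commute)
      also have "\<dots> = integral {0 + (y-u)..\<delta> + (y-u)} (\<lambda>t. (cmod (f t))\<^sup>2)"
        by (rule integral_shift_Icc_real)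
      also have "\<dots> \<le> M" unfolding M_def
        using u by (intro integral_subset_le integrable_continuous_interval continuous_intros cf) auto
      finally show ?thesis .
    qed
    moreover have "S u \<ge> 0" unfolding S_def by (intro sum_nonneg) auto
    ultimately show ?thesis using gf[of u] by (simp add: mult_right_mono order_trans)
  qed
  have cS: "continuous_on {0..\<delta>} S" unfolding S_def using ce
    by (intro continuous_on_sum continuous_intros) auto
  have "integral {0..\<delta>} (\<lambda>u. (cmod (f y))\<^sup>2) \<le> integral {0..\<delta>} (\<lambda>u. M * S u)"
    using key cS by (intro integral_le integrable_continuous_interval continuous_intros) auto
  also have "\<dots> = M * real d" using kernel_integral[OF ce on]
    by (simp add: S_def flip: integral_mult)
  also have "\<dots> \<le> M * real n"
    using dn by (intro mult_left_mono) (auto simp: M_def intro!: integral_nonneg integrable_continuous_interval continuous_intros cf)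
  finally show ?thesis using dpos by (simp add: M_def mult.commute)
qed

lemma int_exp_period:
  fixes \<delta> p :: real and z :: int
  assumes dpos: "\<delta> > 0"
  shows "integral {p..p+2*\<delta>} (\<lambda>s. exp (\<i> * complex_of_real (real_of_int z * (pi/\<delta>) * s)))
       = (if z = 0 then complex_of_real (2*\<delta>) else 0)"
proof (cases "z = 0")
  case True then show ?thesis using dpos by (simp add: scaleR_conv_of_real)
next
  case False
  define w where "w = \<i> * complex_of_real (real_of_int z * (pi/\<delta>))"
  have w0: "w \<noteq> 0" using False dpos by (simp add: w_def)
  have eq: "\<i> * complex_of_real (real_of_int z * (pi/\<delta>) * s) = w * of_real s" for s
    by (simp add: w_def)
  have der: "((\<lambda>x. exp (w * x) / w) has_field_derivative exp (w * x)) (at x)" for x :: complex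
    using w0 by (auto intro!: derivative_eq_intros)
  have "((\<lambda>s. exp (w * of_real s)) has_integral
          (exp (w * of_real (p+2*\<delta>)) / w - exp (w * of_real p) / w)) {p..p+2*\<delta>}"
    using dpos
    by (intro fundamental_theorem_of_calculus[where f="\<lambda>s. exp (w * of_real s) / w"])
       (auto intro!: has_vector_derivative_real_field der)
  moreover have "exp (w * of_real (p+2*\<delta>)) = exp (w * of_real p)"
  proof -
    have "w * of_real (p+2*\<delta>) = w * of_real p + (2 * of_int z * pi) * \<i>"
      using dpos by (simp add: w_def field_simps)
    then show ?thesis using exp_integer_2pi[of "of_int z"] by (simp add: exp_add)
  qed
  ultimately have "integral {p..p+2*\<delta>} (\<lambda>s. exp (w * of_real s)) = 0"
    by (simp add: integral_unique)
  then show ?thesis using False by (simp only: eq) simp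
qed

lemma dirichlet_sq_eq:
  fixes \<delta> s :: real and n :: nat
  shows "complex_of_real ((cmod (\<Sum>k<n. exp (\<i> * complex_of_real (real k * (pi/\<delta>) * s))))\<^sup>2)
     = (\<Sum>k<n. \<Sum>l<n. exp (\<i> * complex_of_real (real_of_int (int k - int l) * (pi/\<delta>) * s)))"
proof -
  let ?D = "\<Sum>k<n. exp (\<i> * complex_of_real (real k * (pi/\<delta>) * s))"
  have "complex_of_real ((cmod ?D)\<^sup>2) = ?D * cnj ?D" by (rule complex_norm_square)
  also have "cnj ?D = (\<Sum>l<n. exp (- (\<i> * complex_of_real (real l * (pi/\<delta>) * s))))"
    by (simp add: cnj_sum exp_cnj)
  also have "?D * \<dots> = (\<Sum>k<n. \<Sum>l<n. exp (\<i> * complex_of_real (real k * (pi/\<delta>) * s)) *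
                 exp (- (\<i> * complex_of_real (real l * (pi/\<delta>) * s))))"
    by (rule sum_product)
  also have "\<dots> = (\<Sum>k<n. \<Sum>l<n. exp (\<i> * complex_of_real (real_of_int (int k - int l) * (pi/\<delta>) * s)))"
    by (intro sum.cong refl) (simp add: algebra_simps flip: exp_add)
  finally show ?thesis .
qed

lemma dirichlet_int:
  fixes \<delta> p :: real and n :: nat
  assumes dpos: "\<delta> > 0"
  shows "integral {p..p+2*\<delta>} (\<lambda>s. (cmod (\<Sum>k<n. exp (\<i> * complex_of_real (real k * (pi/\<delta>) * s))))\<^sup>2)
     = 2 * \<delta> * real n"
proof -
  let ?g = "\<lambda>s. (cmod (\<Sum>k<n. exp (\<i> * complex_of_real (real k * (pi/\<delta>) * s))))\<^sup>2"
  have ig: "?g integrable_on {p..p+2*\<delta>}"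
    by (intro integrable_continuous_interval continuous_intros)
  have "complex_of_real (integral {p..p+2*\<delta>} ?g) = integral {p..p+2*\<delta>} (\<lambda>s. complex_of_real (?g s))"
  proof -
    have "((\<lambda>s. complex_of_real (?g s)) has_integral complex_of_real (integral {p..p+2*\<delta>} ?g)) {p..p+2*\<delta>}"
      by (rule has_integral_of_real[OF integrable_integral[OF ig]])
    from integral_unique[OF this] show ?thesis by simp
  qed
  also have "\<dots> = integral {p..p+2*\<delta>} (\<lambda>s. \<Sum>k<n. \<Sum>l<n. exp (\<i> * complex_of_real (real_of_int (int k - int l) * (pi/\<delta>) * s)))"
    by (simp only: dirichlet_sq_eq)
  also have "\<dots> = (\<Sum>k<n. \<Sum>l<n. integral {p..p+2*\<delta>} (\<lambda>s. exp (\<i> * complex_of_real (real_of_int (int k - int l) * (pi/\<delta>) * s))))"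
    by (subst integral_sum, simp, intro integrable_sum integrable_continuous_interval continuous_intros, simp,
        intro sum.cong refl integral_sum, simp, intro integrable_continuous_interval continuous_intros)
  also have "\<dots> = (\<Sum>k<n. \<Sum>l<n. if l = k then complex_of_real (2*\<delta>) else 0)"
  proof (intro sum.cong refl)
    fix k l :: nat
    have "integral {p..p+2*\<delta>} (\<lambda>s. exp (\<i> * complex_of_real (real_of_int (int k - int l) * (pi/\<delta>) * s)))
       = (if int k - int l = 0 then complex_of_real (2*\<delta>) else 0)"
      by (rule int_exp_period[OF dpos])
    then show "integral {p..p+2*\<delta>} (\<lambda>s. exp (\<i> * complex_of_real (real_of_int (int k - int l) * (pi/\<delta>) * s)))
       = (if l = k then complex_of_real (2*\<delta>) else 0)" by auto
  qed
  also have "\<dots> = complex_of_real (2 * \<delta> * real n)" by simp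
  finally show ?thesis by (simp only: of_real_eq_iff)
qed

lemma lower_construct:
  fixes a b y \<delta> :: real and n :: nat
  assumes dpos: "\<delta> > 0" and ay: "y - \<delta> \<le> a" and ab: "a \<le> b"
  shows "\<exists>f \<in> exp_sums n. f y = of_nat n \<and> integral {a..b} (\<lambda>t. (cmod (f t))\<^sup>2) \<le> 8 * \<delta> * real n"
proof -
  define L where "L = ln 2 / (4 * \<delta>)"
  define lam where "lam = (\<lambda>j::nat. - complex_of_real L + \<i> * complex_of_real (real (j - 1) * (pi/\<delta>)))"
  define cc where "cc = (\<lambda>j. exp (- (lam j * complex_of_real y)))"
  define f where "f = (\<lambda>t::real. \<Sum>j\<in>{1..n}. cc j * exp (lam j * complex_of_real t))"
  define Ds where "Ds = (\<lambda>s::real. \<Sum>k<n. exp (\<i> * complex_of_real (real k * (pi/\<delta>) * s)))"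
  have fE: "f \<in> exp_sums n" unfolding exp_sums_def f_def by blast
  have f_eq: "f t = complex_of_real (exp (- L * (t - y))) * Ds (t - y)" for t
  proof -
    have "f t = (\<Sum>k<n. cc (Suc k) * exp (lam (Suc k) * complex_of_real t))"
      unfolding f_def by (subst image_Suc_lessThan[symmetric], subst sum.reindex) auto
    also have "\<dots> = (\<Sum>k<n. complex_of_real (exp (- L * (t - y))) * exp (\<i> * complex_of_real (real k * (pi/\<delta>) * (t - y))))"
    proof (intro sum.cong refl)
      fix k
      have "cc (Suc k) * exp (lam (Suc k) * complex_of_real t) = exp (lam (Suc k) * complex_of_real (t - y))"
        by (simp add: cc_def algebra_simps flip: exp_add)
      also have "lam (Suc k) * complex_of_real (t - y) = complex_of_real (- L * (t - y)) + \<i> * complex_of_real (real k * (pi/\<delta>) * (t - y))"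
        by (simp add: lam_def algebra_simps)
      finally have X: "cc (Suc k) * exp (lam (Suc k) * complex_of_real t) =
         exp (complex_of_real (- L * (t - y)) + \<i> * complex_of_real (real k * (pi/\<delta>) * (t - y)))" .
      show "cc (Suc k) * exp (lam (Suc k) * complex_of_real t) =
         complex_of_real (exp (- L * (t - y))) * exp (\<i> * complex_of_real (real k * (pi/\<delta>) * (t - y)))"
        unfolding X exp_add exp_of_real by (rule refl)
    qed
    also have "\<dots> = complex_of_real (exp (- L * (t - y))) * Ds (t - y)"
      by (simp add: Ds_def sum_distrib_left)
    finally show ?thesis .
  qed
  have fy: "f y = of_nat n" using f_eq[of y] by (simp add: Ds_def)
  define h where "h = (\<lambda>t. (cmod (f t))\<^sup>2)"
  have h_eq: "h t = exp (- L * (t - y)) ^ 2 * (cmod (Ds (t - y)))\<^sup>2" for t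
    by (simp add: h_def f_eq norm_mult power_mult_distrib)
  have cf: "continuous_on A f" for A unfolding f_def by (intro continuous_intros)
  have ch: "continuous_on A h" for A unfolding h_def by (intro continuous_intros cf)
  have ih: "h integrable_on {u..v}" for u v by (intro integrable_continuous_interval ch)
  have hnn: "h t \<ge> 0" for t by (simp add: h_def)
  have Lpos: "L > 0" using dpos by (simp add: L_def)
  have L4: "4 * L * \<delta> = ln 2" using dpos by (simp add: L_def)
  have period: "integral {y - \<delta> + 2*\<delta>*real m .. y - \<delta> + 2*\<delta>*real m + 2*\<delta>} h \<le> 4 * \<delta> * real n / 2 ^ m" for m
  proof -
    define p where "p = y - \<delta> + 2*\<delta>*real m"
    have wb: "exp (- L * (t - y)) ^ 2 \<le> 2 / 2 ^ m" if "t \<in> {p..p+2*\<delta>}" for t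
    proof -
      have "exp (- L * (t - y)) ^ 2 = exp (- 2 * L * (t - y))"
        by (simp add: exp_of_nat_mult[symmetric] algebra_simps)
      also have "\<dots> \<le> exp (ln 2 - real m * ln 2)"
      proof -
        have "t - y \<ge> 2*\<delta>*real m - \<delta>" using that by (simp add: p_def)
        then have "- 2 * L * (t - y) \<le> - 2 * L * (2*\<delta>*real m - \<delta>)" using Lpos by (intro mult_left_mono_neg) auto
        also have "\<dots> = ln 2 / 2 - real m * (4 * L * \<delta>)" using L4 by (simp add: algebra_simps)
        also have "\<dots> \<le> ln 2 - real m * ln 2" using L4 by simp
        finally show ?thesis by simp
      qed
      also have "\<dots> = 2 / 2 ^ m"
        by (simp add: exp_diff exp_of_nat_mult)
      finally show ?thesis .
    qed
    have "integral {p..p+2*\<delta>} h \<le> integral {p..p+2*\<delta>} (\<lambda>t. 2 / 2 ^ m * (cmod (Ds (t - y)))\<^sup>2)"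
    proof (rule integral_le[OF ih])
      show "(\<lambda>t. 2 / 2 ^ m * (cmod (Ds (t - y)))\<^sup>2) integrable_on {p..p + 2 * \<delta>}"
        unfolding Ds_def by (intro integrable_continuous_interval continuous_intros)
      fix t assume "t \<in> {p..p + 2 * \<delta>}"
      then show "h t \<le> 2 / 2 ^ m * (cmod (Ds (t - y)))\<^sup>2"
        unfolding h_eq by (intro mult_right_mono wb) auto
    qed
    also have "\<dots> = 2 / 2 ^ m * integral {p..p+2*\<delta>} (\<lambda>t. (cmod (Ds (t - y)))\<^sup>2)"
      by (simp add: integral_mult[symmetric] Ds_def integrable_continuous_interval continuous_intros)
    also have "integral {p..p+2*\<delta>} (\<lambda>t. (cmod (Ds (t - y)))\<^sup>2) = integral {p + (- y) .. p + 2*\<delta> + (- y)} (\<lambda>s. (cmod (Ds s))\<^sup>2)"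
      using integral_shift_Icc_real[of p "p+2*\<delta>" "\<lambda>s. (cmod (Ds s))\<^sup>2" "-y"]
      by (simp add: o_def add.commute)
    also have "\<dots> = 2 * \<delta> * real n" using dirichlet_int[OF dpos, of "p - y" n]
      by (simp add: Ds_def algebra_simps)
    finally show ?thesis by (simp add: p_def)
  qed
  have accum: "integral {y - \<delta> .. y - \<delta> + 2*\<delta>*real N} h \<le> 8 * \<delta> * real n * (1 - 1 / 2 ^ N)" for N
  proof (induction N)
    case 0 then show ?case by simp
  next
    case (Suc N)
    have "integral {y - \<delta> .. y - \<delta> + 2*\<delta>*real (Suc N)} h =
          integral {y - \<delta> .. y - \<delta> + 2*\<delta>*real N} h +
          integral {y - \<delta> + 2*\<delta>*real N .. y - \<delta> + 2*\<delta>*real N + 2*\<delta>} h"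
    proof -
      have e: "y - \<delta> + 2*\<delta>*real (Suc N) = y - \<delta> + 2*\<delta>*real N + 2*\<delta>" by (simp add: algebra_simps)
      show ?thesis unfolding e by (rule Henstock_Kurzweil_Integration.integral_combine[symmetric]) (use dpos in \<open>auto intro: ih\<close>)
    qed
    also have "\<dots> \<le> 8 * \<delta> * real n * (1 - 1 / 2 ^ N) + 4 * \<delta> * real n / 2 ^ N"
      using Suc.IH period[of N] by linarith
    also have "\<dots> = 8 * \<delta> * real n * (1 - 1 / 2 ^ Suc N)" by (simp add: field_simps)
    finally show ?case .
  qed
  obtain N :: nat where N: "(b - y + \<delta>) / (2*\<delta>) \<le> real N" using real_arch_simple by blast
  have bN: "b \<le> y - \<delta> + 2*\<delta>*real N" using N dpos by (simp add: field_simps)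
  have "integral {a..b} h \<le> integral {y - \<delta> .. y - \<delta> + 2*\<delta>*real N} h"
    using ay bN hnn by (intro integral_subset_le ih) auto
  also have "\<dots> \<le> 8 * \<delta> * real n * (1 - 1 / 2 ^ N)" by (rule accum)
  also have "\<dots> \<le> 8 * \<delta> * real n" using dpos by (simp add: mult_left_le)
  finally show ?thesis using fE fy unfolding h_def by blast
qed

lemma lower_construct2:
  fixes a b y \<delta> :: real and n :: nat
  assumes dpos: "\<delta> > 0" and ab: "a \<le> b" and side: "y - \<delta> \<le> a \<or> b \<le> y + \<delta>"
  shows "\<exists>f \<in> exp_sums n. f y = of_nat n \<and> integral {a..b} (\<lambda>t. (cmod (f t))\<^sup>2) \<le> 8 * \<delta> * real n"
  using side
proof
  assume "y - \<delta> \<le> a" then show ?thesis using lower_construct[OF dpos _ ab] by blast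
next
  assume "b \<le> y + \<delta>"
  then have "-y - \<delta> \<le> -b" by simp
  from lower_construct[OF dpos this, of "-a" n] ab
  obtain g where g: "g \<in> exp_sums n" "g (-y) = of_nat n"
    "integral {-b..-a} (\<lambda>t. (cmod (g t))\<^sup>2) \<le> 8 * \<delta> * real n" by auto
  from g(1) obtain c lam where gdef: "g = (\<lambda>t. \<Sum>j\<in>{1..n}. c j * exp (lam j * complex_of_real t))"
    unfolding exp_sums_def by blast
  define f where "f = (\<lambda>t. g (- t))"
  have fe: "f = (\<lambda>t. \<Sum>j\<in>{1..n}. c j * exp ((- lam j) * complex_of_real t))"
    unfolding f_def gdef by simp
  have "f \<in> exp_sums n" unfolding exp_sums_def mem_Collect_eq
    by (rule exI[of _ c], rule exI[of _ "\<lambda>j. - lam j"]) (simp add: fe)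
  moreover have "f y = of_nat n" using g(2) by (simp add: f_def)
  moreover have "integral {a..b} (\<lambda>t. (cmod (f t))\<^sup>2) = integral {-b..-a} (\<lambda>t. (cmod (g t))\<^sup>2)"
    using Henstock_Kurzweil_Integration.integral_reflect_real[of "-a" "-b" "\<lambda>t. (cmod (g t))\<^sup>2"] by (simp add: f_def)
  ultimately show ?thesis using g(3) by auto
qed

theorem theorem7p1:
  fixes a b y :: real and n :: nat
  assumes "a < b" and "a < y" and "y < b" and "n \<ge> 2"
  shows "ereal (sqrt ((real n - 2) * ln 2 / (32 * min (y - a) (b - y))))
           \<le> (SUP f\<in>{f \<in> exp_sums n. f \<noteq> (\<lambda>_. 0)}. ereal (cmod (f y) / L2_norm_on a b f))
         \<and> (SUP f\<in>{f \<in> exp_sums n. f \<noteq> (\<lambda>_. 0)}. ereal (cmod (f y) / L2_norm_on a b f))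
           \<le> ereal (sqrt (2 * real n / min (y - a) (b - y)))"
proof
  define \<delta> where "\<delta> = min (y - a) (b - y)"
  have dpos: "\<delta> > 0" using assms by (simp add: \<delta>_def)
  have sub: "{y - \<delta>..y + \<delta>} \<subseteq> {a..b}" by (auto simp: \<delta>_def)
  show "ereal (sqrt ((real n - 2) * ln 2 / (32 * min (y - a) (b - y))))
           \<le> (SUP f\<in>{f \<in> exp_sums n. f \<noteq> (\<lambda>_. 0)}. ereal (cmod (f y) / L2_norm_on a b f))"
  proof -
    have side: "y - \<delta> \<le> a \<or> b \<le> y + \<delta>" by (auto simp: \<delta>_def min_def)
    obtain f where fE: "f \<in> exp_sums n" and fy: "f y = of_nat n"
      and fI: "integral {a..b} (\<lambda>t. (cmod (f t))\<^sup>2) \<le> 8 * \<delta> * real n"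
      using lower_construct2[OF dpos _ side, of n] assms(1) by auto
    define I where "I = integral {a..b} (\<lambda>t. (cmod (f t))\<^sup>2)"
    have npos: "real n > 0" using assms(4) by simp
    have f0: "f \<noteq> (\<lambda>_. 0)"
    proof
      assume "f = (\<lambda>_. 0)"
      then have "f y = 0" by simp
      with fy npos show False by simp
    qed
    obtain c lam where fdef: "f = (\<lambda>t. \<Sum>j\<in>{1..n}. c j * exp (lam j * complex_of_real t))"
      using fE unfolding exp_sums_def by blast
    have cf: "continuous_on A f" for A unfolding fdef by (intro continuous_intros)
    have Ipos: "I > 0"
    proof -
      have "I \<ge> 0" unfolding I_def
        by (intro integral_nonneg integrable_continuous_interval continuous_intros cf) auto
      moreover have "I \<noteq> 0"
      proof
        assume "I = 0"
        then have "\<forall>x\<in>{a..b}. (cmod (f x))\<^sup>2 = 0" unfolding I_def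
          using assms(1) by (subst (asm) integral_eq_0_iff) (auto intro!: continuous_intros cf)
        then have "f y = 0" using assms by auto
        then show False using fy npos by simp
      qed
      ultimately show ?thesis by simp
    qed
    have "sqrt ((real n - 2) * ln 2 / (32 * \<delta>)) \<le> sqrt (real n / (8 * \<delta>))"
    proof (rule real_sqrt_le_mono)
      have "ln (2::real) \<le> 1" using ln_le_minus_one[of 2] by simp
      moreover have "(real n - 2) * ln 2 \<le> (real n - 2) * 1"
        using \<open>ln 2 \<le> 1\<close> assms(4) by (intro mult_left_mono) auto
      ultimately have "(real n - 2) * ln 2 \<le> real n * 4" using npos by (smt (verit))
      then have "(real n - 2) * ln 2 / (32 * \<delta>) \<le> real n * 4 / (32 * \<delta>)"
        using dpos by (intro divide_right_mono) auto
      also have "real n * 4 / (32 * \<delta>) = real n / (8 * \<delta>)" by simp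
      finally show "(real n - 2) * ln 2 / (32 * \<delta>) \<le> real n / (8 * \<delta>)" .
    qed
    also have "\<dots> = real n / sqrt (8 * \<delta> * real n)"
    proof -
      have e1: "8*\<delta>*real n * (real n/(8*\<delta>)) = real n * real n" using dpos by (simp add: field_simps)
      have "sqrt (8*\<delta>*real n) * sqrt (real n/(8*\<delta>)) = real n"
        using npos by (simp only: real_sqrt_mult[symmetric] e1 real_sqrt_mult_self) simp
      moreover have "sqrt (8*\<delta>*real n) > 0" using npos dpos by simp
      ultimately show ?thesis by (simp add: eq_divide_eq mult.commute)
    qed
    also have "\<dots> \<le> real n / sqrt I"
      using Ipos npos fI by (intro divide_left_mono real_sqrt_le_mono) (auto simp: I_def)
    also have "\<dots> = cmod (f y) / L2_norm_on a b f" by (simp add: L2_norm_on_def I_def fy)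
    finally have "ereal (sqrt ((real n - 2) * ln 2 / (32 * \<delta>))) \<le> ereal (cmod (f y) / L2_norm_on a b f)"
      by simp
    also have "\<dots> \<le> (SUP f\<in>{f \<in> exp_sums n. f \<noteq> (\<lambda>_. 0)}. ereal (cmod (f y) / L2_norm_on a b f))"
      using fE f0 by (intro SUP_upper) auto
    finally show ?thesis by (simp add: \<delta>_def)
  qed
  show "(SUP f\<in>{f \<in> exp_sums n. f \<noteq> (\<lambda>_. 0)}. ereal (cmod (f y) / L2_norm_on a b f))
           \<le> ereal (sqrt (2 * real n / min (y - a) (b - y)))"
  proof (rule SUP_least)
    fix f assume "f \<in> {f \<in> exp_sums n. f \<noteq> (\<lambda>_. 0)}"
    then obtain c lam where fdef: "f = (\<lambda>t. \<Sum>j\<in>{1..n}. c j * exp (lam j * complex_of_real t))"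
      unfolding exp_sums_def by blast
    have cf: "continuous_on A f" for A unfolding fdef by (intro continuous_intros)
    define I where "I = integral {a..b} (\<lambda>t. (cmod (f t))\<^sup>2)"
    have "(cmod (f y))\<^sup>2 * \<delta> \<le> real n * integral {y-\<delta>..y+\<delta>} (\<lambda>t. (cmod (f t))\<^sup>2)"
      unfolding fdef by (rule upper_pointwise[OF dpos])
    also have "\<dots> \<le> real n * I"
      unfolding I_def using sub
      by (intro mult_left_mono integral_subset_le integrable_continuous_interval continuous_intros cf) auto
    finally have key: "(cmod (f y))\<^sup>2 \<le> real n / \<delta> * I" using dpos by (simp add: field_simps)
    have I0: "I \<ge> 0" unfolding I_def
      by (intro integral_nonneg integrable_continuous_interval continuous_intros cf) auto
    have "cmod (f y) / sqrt I \<le> sqrt (2 * real n / \<delta>)"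
    proof (cases "I = 0")
      case True then show ?thesis using dpos by simp
    next
      case False
      then have Ip: "I > 0" using I0 by simp
      have "cmod (f y) = sqrt ((cmod (f y))\<^sup>2)" by simp
      also have "\<dots> \<le> sqrt (real n / \<delta> * I)" using key by (rule real_sqrt_le_mono)
      also have "\<dots> = sqrt (real n / \<delta>) * sqrt I" by (simp only: real_sqrt_mult)
      also have "\<dots> \<le> sqrt (2 * real n / \<delta>) * sqrt I"
        using dpos I0 by (intro mult_right_mono real_sqrt_le_mono) (auto simp: field_simps)
      finally show ?thesis using Ip by (simp add: divide_le_eq)
    qed
    then show "ereal (cmod (f y) / L2_norm_on a b f) \<le> ereal (sqrt (2 * real n / min (y - a) (b - y)))"
      by (simp add: L2_norm_on_def I_def \<delta>_def)
  qed
qed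

end
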